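(* Let $(X,* )$ be an infinite compact metrizable group with identity $e$, and let $f\colon X\to X$ be a continuous group homomorphism which is transitive and satisfies $\overline{\mathcal M(f)}=X$. Let $S\subset X$ be a syndetically scrambled set for $f$ with $e\in S$, let $x\in\mathrm{Tran}(f)$, and put $T=S*x=\{a*x:a\in S\}$. Then: (i) $T$ is homeomorphic to $S$ and $T$ is syndetically scrambled for $f$; moreover, if $d$ is a two-sided invariant compatible metric on $X$ and $S$ is syndetically $\varepsilon$-scrambled with respect to $d$, then so is $T$; (ii) $T\subset\mathrm{Tran}(f)$, and for every $y\in T$ the orbit closure $\overline{\{f^n(y):n\ge0\}}$ contains infinitely many distinct minimal sets; (iii) $\mathrm{SProx}(f)(y)\cap\mathcal M(f)=\emptyset$ for every $y\in T$.
   Context: $X$ is a compact metric space, $f$ continuous. $\mathrm{Tran}(f)$ is the set of points with dense forward orbit; $f$ is transitive if for all nonempty open $U,V$ there is $n\in\mathbb N$ with $f^n(U)\cap V\ne\emptyset$. A minimal set is a nonempty closed $f$-invariant set with no proper nonempty closed invariant subset; $\mathcal M(f)$ is the set of points belonging to some minimal set. A metric $d$ is two-sided invariant if $d(a,b)=d(a*z,b*z)=d(z*a,z*b)$. Syndetic: a subset of $\mathbb N$ meeting every set containing arbitrarily long runs of consecutive integers. $\mathrm{Asy}(f)=\{(x,y):\lim_n d(f^n x,f^n y)=0\}$; $\mathrm{SProx}(f)=\{(x,y): \{n: d(f^nx,f^ny)<\varepsilon\}$ syndetic for all $\varepsilon>0\}$, and $\mathrm{SProx}(f)(y)=\{z:(y,z)\in\mathrm{SProx}(f)\}$.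 A set with at least two points is syndetically scrambled if all pairs of distinct points lie in $\mathrm{SProx}(f)\setminus\mathrm{Asy}(f)$; syndetically $\varepsilon$-scrambled if moreover $\limsup_n d(f^nx,f^ny)\ge\varepsilon$ for all distinct $x,y$ in it. *)

theory Defs
  imports "HOL-Analysis.Analysis"
begin

definition transitive_map :: "('a::topological_space \<Rightarrow> 'a) \<Rightarrow> bool" where
  "transitive_map f \<longleftrightarrow>
     (\<forall>U V. open U \<and> open V \<and> U \<noteq> {} \<and> V \<noteq> {} \<longrightarrow>
        (\<exists>n::nat. n \<ge> 1 \<and> (f ^^ n) ` U \<inter> V \<noteq> {}))"

definition forward_orbit :: "('a \<Rightarrow> 'a) \<Rightarrow> 'a \<Rightarrow> 'a set" where
  "forward_orbit f x = range (\<lambda>n. (f ^^ n) x)"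

definition Tran :: "('a::topological_space \<Rightarrow> 'a) \<Rightarrow> 'a set" where
  "Tran f = {x. closure (forward_orbit f x) = UNIV}"

definition minimal_set :: "('a::topological_space \<Rightarrow> 'a) \<Rightarrow> 'a set \<Rightarrow> bool" where
  "minimal_set f M \<longleftrightarrow> M \<noteq> {} \<and> closed M \<and> f ` M \<subseteq> M \<and>
     (\<forall>N. N \<subseteq> M \<and> N \<noteq> {} \<and> closed N \<and> f ` N \<subseteq> N \<longrightarrow> N = M)"

definition minimal_points :: "('a::topological_space \<Rightarrow> 'a) \<Rightarrow> 'a set" where
  "minimal_points f = \<Union>{M. minimal_set f M}"

definition syndetic :: "nat set \<Rightarrow> bool" where
  "syndetic A \<longleftrightarrow> (\<forall>B. (\<forall>L. \<exists>m. {m..<m+L} \<subseteq> B) \<longrightarrow> A \<inter> B \<noteq> {})"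

definition Asy :: "('a \<Rightarrow> 'a \<Rightarrow> real) \<Rightarrow> ('a \<Rightarrow> 'a) \<Rightarrow> ('a \<times> 'a) set" where
  "Asy d f = {(x, y). (\<lambda>n. d ((f ^^ n) x) ((f ^^ n) y)) \<longlonglongrightarrow> 0}"

definition SProx :: "('a \<Rightarrow> 'a \<Rightarrow> real) \<Rightarrow> ('a \<Rightarrow> 'a) \<Rightarrow> ('a \<times> 'a) set" where
  "SProx d f = {(x, y). \<forall>\<epsilon>>0. syndetic {n. d ((f ^^ n) x) ((f ^^ n) y) < \<epsilon>}}"

definition synd_scrambled :: "('a \<Rightarrow> 'a \<Rightarrow> real) \<Rightarrow> ('a \<Rightarrow> 'a) \<Rightarrow> 'a set \<Rightarrow> bool" where
  "synd_scrambled d f S \<longleftrightarrow> (\<exists>a\<in>S. \<exists>b\<in>S. a \<noteq> b) \<and>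
     (\<forall>x\<in>S. \<forall>y\<in>S. x \<noteq> y \<longrightarrow> (x, y) \<in> SProx d f - Asy d f)"

definition synd_eps_scrambled :: "('a \<Rightarrow> 'a \<Rightarrow> real) \<Rightarrow> ('a \<Rightarrow> 'a) \<Rightarrow> real \<Rightarrow> 'a set \<Rightarrow> bool" where
  "synd_eps_scrambled d f \<epsilon> S \<longleftrightarrow> synd_scrambled d f S \<and>
     (\<forall>x\<in>S. \<forall>y\<in>S. x \<noteq> y \<longrightarrow>
        limsup (\<lambda>n. ereal (d ((f ^^ n) x) ((f ^^ n) y))) \<ge> ereal \<epsilon>)"

definition compatible_metric :: "('a::topological_space \<Rightarrow> 'a \<Rightarrow> real) \<Rightarrow> bool" where
  "compatible_metric d \<longleftrightarrow>
     (\<forall>x y. d x y = 0 \<longleftrightarrow> x = y) \<and> (\<forall>x y. d x y = d y x) \<and>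
     (\<forall>x y z. d x z \<le> d x y + d y z) \<and>
     (\<forall>U. open U \<longleftrightarrow> (\<forall>x\<in>U. \<exists>r>0. \<forall>y. d x y < r \<longrightarrow> y \<in> U))"

definition two_sided_invariant :: "('a::plus \<Rightarrow> 'a \<Rightarrow> real) \<Rightarrow> bool" where
  "two_sided_invariant d \<longleftrightarrow> (\<forall>a b z. d a b = d (a + z) (b + z) \<and> d a b = d (z + a) (z + b))"

end

theory Submission
  imports Defs
begin

lemma funpow_prod: "(map_prod (f::'x\<Rightarrow>'x) (g::'y\<Rightarrow>'y) ^^ n) (y, z) = ((f ^^ n) y, (g ^^ n) z)"
  by (induction n) (auto simp: funpow.simps)

lemma cont_funpow: "continuous_on UNIV h \<Longrightarrow> continuous_on UNIV ((h::'b::topological_space\<Rightarrow>'b) ^^ n)"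
proof (induction n)
  case 0 then show ?case by (simp add: continuous_on_id funpow.simps)
next
  case (Suc n)
  then show ?case
    using continuous_on_compose2[of UNIV h UNIV "h^^n"] by (simp add: o_def)
qed

lemma orbit_closure_inv:
  fixes h :: "'b::topological_space \<Rightarrow> 'b"
  assumes "continuous_on UNIV h"
  shows "h ` closure (range (\<lambda>n. (h ^^ n) w)) \<subseteq> closure (range (\<lambda>n. (h ^^ n) w))"
proof (rule image_closure_subset)
  show "continuous_on (closure (range (\<lambda>n. (h ^^ n) w))) h"
    using assms continuous_on_subset by blast
  show "h ` range (\<lambda>n. (h ^^ n) w) \<subseteq> closure (range (\<lambda>n. (h ^^ n) w))"
  proof clarify
    fix n show "h ((h ^^ n) w) \<in> closure (range (\<lambda>n. (h ^^ n) w))"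
      using closure_subset[of "range (\<lambda>n. (h ^^ n) w)"]
      by (metis (no_types, lifting) funpow.simps(2) o_apply rangeI subsetD)
  qed
qed simp

lemma orbit_in_inv:
  fixes h :: "'b \<Rightarrow> 'b"
  assumes "h ` M \<subseteq> M" "w \<in> M"
  shows "(h ^^ n) w \<in> M"
  using assms by (induction n) auto

lemma orbit_closure_sub:
  fixes h :: "'b::topological_space \<Rightarrow> 'b"
  assumes "closed M" "h ` M \<subseteq> M" "w \<in> M"
  shows "closure (range (\<lambda>n. (h ^^ n) w)) \<subseteq> M"
  using assms orbit_in_inv[OF assms(2,3)] by (intro closure_minimal) auto

lemma thick_lemma:
  fixes h :: "'b::topological_space \<Rightarrow> 'b"
  assumes ch: "continuous_on UNIV h" and inv: "h ` K \<subseteq> K" and oU: "open U" and KU: "K \<subseteq> U"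
    and kK: "k \<in> K" and kc: "k \<in> closure (range (\<lambda>n. (h ^^ n) w))"
  shows "\<forall>L. \<exists>m. {m..<m+L} \<subseteq> {n. (h ^^ n) w \<in> U}"
proof
  fix L :: nat
  define V where "V = (\<Inter>j<L. (h ^^ j) -` U)"
  have "open V" unfolding V_def
    by (intro open_INT) (auto intro!: open_vimage oU cont_funpow ch)
  moreover have "k \<in> V" unfolding V_def using orbit_in_inv[OF inv kK] KU by auto
  ultimately have "V \<inter> range (\<lambda>n. (h ^^ n) w) \<noteq> {}"
    using open_Int_closure_eq_empty[of V "range (\<lambda>n. (h ^^ n) w)"] kc by auto
  then obtain n where nV: "(h ^^ n) w \<in> V" by auto
  have "{n..<n+L} \<subseteq> {n. (h ^^ n) w \<in> U}"
  proof
    fix i assume "i \<in> {n..<n+L}"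
    then obtain j where j: "i = j + n" "j < L" by (metis add.commute atLeastLessThan_iff le_Suc_ex nat_add_left_cancel_less)
    then have "(h ^^ j) ((h ^^ n) w) \<in> U" using nV unfolding V_def by auto
    then show "i \<in> {n. (h ^^ n) w \<in> U}" using j by (simp add: funpow_add)
  qed
  then show "\<exists>m. {m..<m+L} \<subseteq> {n. (h ^^ n) w \<in> U}" by blast
qed

lemma synd_thick: "syndetic A \<Longrightarrow> \<forall>L. \<exists>m. {m..<m+L} \<subseteq> B \<Longrightarrow> A \<inter> B \<noteq> {}"
  unfolding syndetic_def by blast

lemma image_closure_compact:
  fixes \<phi> :: "'b::topological_space \<Rightarrow> 'c::t2_space"
  assumes "compact (UNIV :: 'b set)" "continuous_on UNIV \<phi>"
  shows "\<phi> ` closure S = closure (\<phi> ` S)"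
proof
  show "\<phi> ` closure S \<subseteq> closure (\<phi> ` S)"
    using assms(2) closure_subset[of "\<phi> ` S"] by (intro image_closure_subset) (auto intro: continuous_on_subset)
  have "compact (closure S)" using assms(1) closed_Int_compact[of "closure S" UNIV] by simp
  then have "compact (\<phi> ` closure S)" using assms(2) by (intro compact_continuous_image) (auto intro: continuous_on_subset)
  then have "closed (\<phi> ` closure S)" by (rule compact_imp_closed)
  then show "closure (\<phi> ` S) \<subseteq> \<phi> ` closure S"
    using closure_subset[of S] by (intro closure_minimal) auto
qed


lemma hom0:
  fixes f :: "'a::group_add \<Rightarrow> 'a"
  assumes "\<And>a b. f (a + b) = f a + f b"
  shows "f 0 = 0"
proof -
  have "f 0 + f 0 = f 0 + 0" using assms[of 0 0] by simp
  then show ?thesis by (metis add_left_cancel)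
qed

lemma hom_funpow:
  fixes f :: "'a::group_add \<Rightarrow> 'a"
  assumes "\<And>a b. f (a + b) = f a + f b"
  shows "(f ^^ n) (a + b) = (f ^^ n) a + (f ^^ n) b"
  by (induction n) (auto simp: assms)

lemma hom_funpow0:
  fixes f :: "'a::group_add \<Rightarrow> 'a"
  assumes "\<And>a b. f (a + b) = f a + f b"
  shows "(f ^^ n) 0 = 0"
  by (induction n) (auto simp: hom0[OF assms])

lemma cont_transl:
  fixes c :: "'a::{topological_space, plus}"
  assumes "continuous_on UNIV (\<lambda>p :: 'a \<times> 'a. fst p + snd p)"
  shows "continuous_on UNIV (\<lambda>a. a + c)"
proof -
  have "continuous_on UNIV (\<lambda>a::'a. (a, c))" by (intro continuous_intros)
  then show ?thesis using continuous_on_compose2[OF assms, of UNIV "\<lambda>a. (a, c)"] by simp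
qed

lemma cont_prodf:
  fixes f :: "'a::topological_space \<Rightarrow> 'a"
  assumes "continuous_on UNIV f"
  shows "continuous_on UNIV (map_prod f f)"
proof -
  have "continuous_on UNIV (\<lambda>p::'a\<times>'a. (f (fst p), f (snd p)))"
    by (intro continuous_on_Pair continuous_on_compose2[OF assms] continuous_intros) auto
  moreover have "map_prod f f = (\<lambda>p. (f (fst p), f (snd p)))" by (auto simp: fun_eq_iff)
  ultimately show ?thesis by simp
qed

lemma compact_prod_UNIV:
  assumes "compact (UNIV :: 'a::topological_space set)"
  shows "compact (UNIV :: ('a \<times> 'a) set)"
  using compact_Times[OF assms assms] by simp

lemma uc_add:
  fixes dummy :: "'a::{metric_space, plus}"
  assumes "compact (UNIV :: 'a set)"
    and "continuous_on UNIV (\<lambda>p :: 'a \<times> 'a. fst p + snd p)"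
  shows "\<forall>e>0. \<exists>d>0. \<forall>u v w :: 'a. dist u v < d \<longrightarrow> dist (u + w) (v + w) < e"
proof -
  have "uniformly_continuous_on UNIV (\<lambda>p :: 'a \<times> 'a. fst p + snd p)"
    by (rule compact_uniformly_continuous[OF assms(2) compact_prod_UNIV[OF assms(1)]])
  then show ?thesis
    unfolding uniformly_continuous_on_def
    by (metis (no_types, lifting) UNIV_I dist_Pair_Pair dist_self fst_conv snd_conv
        power2_eq_square mult_zero_left add_0_right real_sqrt_abs abs_of_nonneg zero_le_dist real_sqrt_mult_self)
qed


lemma minimal_disjoint:
  assumes "minimal_set f M" "minimal_set f M'" "M \<noteq> M'"
  shows "M \<inter> M' = {}"
proof (rule ccontr)
  assume ne: "M \<inter> M' \<noteq> {}"
  have "closed (M \<inter> M')" using assms unfolding minimal_set_def by auto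
  moreover have "f ` (M \<inter> M') \<subseteq> M \<inter> M'" using assms unfolding minimal_set_def by auto
  ultimately have "M \<inter> M' = M" "M \<inter> M' = M'" using assms ne unfolding minimal_set_def
    by (metis inf_le1, metis inf_le2)
  then show False using assms(3) by simp
qed

lemma orbit_eq: "forward_orbit f x = range (\<lambda>n. (f ^^ n) x)"
  by (simp add: forward_orbit_def)

lemma inf_min:
  fixes f :: "'a::{metric_space, group_add} \<Rightarrow> 'a"
  assumes infinite_X: "infinite (UNIV :: 'a set)"
    and hom_f: "\<And>a b. f (a + b) = f a + f b"
    and dense_M: "closure (minimal_points f) = UNIV"
    and x_tran: "x \<in> Tran f"
  shows "infinite {M. minimal_set f M}"
proof
  assume fin: "finite {M. minimal_set f M}"
  have "closed (minimal_points f)" unfolding minimal_points_def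
    by (rule closed_Union[OF fin]) (auto simp: minimal_set_def)
  then have "minimal_points f = UNIV" using dense_M by simp
  then have "x \<in> \<Union>{M. minimal_set f M}" unfolding minimal_points_def by simp
  then obtain M where M: "minimal_set f M" "x \<in> M" by blast
  have "closure (forward_orbit f x) \<subseteq> M" unfolding orbit_eq
    using M by (intro orbit_closure_sub) (auto simp: minimal_set_def)
  then have MU: "M = UNIV" using x_tran unfolding Tran_def by auto
  have "{0} = M" using M(1) unfolding minimal_set_def using hom0[OF hom_f] MU
    by (metis closed_singleton empty_not_insert image_empty image_insert subset_UNIV subset_refl)
  then show False using MU infinite_X by (metis finite.emptyI finite.insertI)
qed

lemma tran_shift:
  fixes f :: "'a::{metric_space, group_add} \<Rightarrow> 'a"
  assumes compact_X: "compact (UNIV :: 'a set)"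
    and cont_mult: "continuous_on UNIV (\<lambda>p :: 'a \<times> 'a. fst p + snd p)"
    and cont_f: "continuous_on UNIV f"
    and hom_f: "\<And>a b. f (a + b) = f a + f b"
    and dense_M: "closure (minimal_points f) = UNIV"
    and x_tran: "x \<in> Tran f"
    and prox: "(0, a) \<in> SProx dist f"
  shows "a + x \<in> Tran f"
proof -
  define h where "h = map_prod f f"
  define C where "C = closure (forward_orbit f (a + x))"
  define W where "W = closure (range (\<lambda>n. (h ^^ n) (a, x)))"
  define \<phi> where "\<phi> = (\<lambda>p :: 'a \<times> 'a. fst p + snd p)"
  have ch: "continuous_on UNIV h" unfolding h_def by (rule cont_prodf[OF cont_f])
  have hn: "(h ^^ n) (u, v) = ((f ^^ n) u, (f ^^ n) v)" for n u v
    unfolding h_def by (rule funpow_prod)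
  have closedC: "closed C" unfolding C_def by simp
  have phiW: "\<phi> ` W \<subseteq> C" unfolding W_def
  proof (rule image_closure_subset)
    show "continuous_on (closure (range (\<lambda>n. (h ^^ n) (a, x)))) \<phi>"
      using cont_mult unfolding \<phi>_def by (auto intro: continuous_on_subset)
    show "\<phi> ` range (\<lambda>n. (h ^^ n) (a, x)) \<subseteq> C"
      unfolding C_def orbit_eq using closure_subset[of "range (\<lambda>n. (f ^^ n) (a + x))"]
      by (auto simp: hn \<phi>_def hom_funpow[OF hom_f, symmetric])
  qed (rule closedC)
  have sndW: "snd ` W = UNIV"
  proof -
    have "snd ` W = closure (snd ` range (\<lambda>n. (h ^^ n) (a, x)))" unfolding W_def
      by (rule image_closure_compact[OF compact_prod_UNIV[OF compact_X]]) (intro continuous_intros)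
    also have "snd ` range (\<lambda>n. (h ^^ n) (a, x)) = forward_orbit f x"
      unfolding orbit_eq by (auto simp: hn image_image)
    finally show ?thesis using x_tran unfolding Tran_def by simp
  qed
  have fC: "f ` C \<subseteq> C" unfolding C_def orbit_eq by (rule orbit_closure_inv[OF cont_f])
  have hW: "h ` W \<subseteq> W" unfolding W_def by (rule orbit_closure_inv[OF ch])
  have f0: "(f ^^ n) 0 = 0" for n by (rule hom_funpow0[OF hom_f])
  have MC: "M \<subseteq> C" if M: "minimal_set f M" for M
  proof (cases "\<exists>m\<in>M. (0, m) \<in> W")
    case True
    then obtain m where m: "m \<in> M" "(0, m) \<in> W" by auto
    then have "m \<in> C" using phiW unfolding \<phi>_def by force
    then have "M \<inter> C \<noteq> {}" using m by auto
    moreover have "closed (M \<inter> C)" using M closedC unfolding minimal_set_def by auto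
    moreover have "f ` (M \<inter> C) \<subseteq> M \<inter> C" using M fC unfolding minimal_set_def by auto
    ultimately have "M \<inter> C = M" using M unfolding minimal_set_def by (metis inf_le1)
    then show ?thesis by auto
  next
    case False
    define K where "K = W \<inter> (UNIV \<times> M)"
    obtain m where "m \<in> M" using M unfolding minimal_set_def by auto
    have "m \<in> snd ` W" using sndW by simp
    then obtain u where "(u, m) \<in> W" by force
    then have Kne: "K \<noteq> {}" using \<open>m \<in> M\<close> unfolding K_def by auto
    have "closed K" unfolding K_def W_def using M unfolding minimal_set_def
      by (intro closed_Int closed_Times) auto
    then have cK: "compact K" using compact_prod_UNIV[OF compact_X] closed_Int_compact[of K UNIV] by simp
    have hK: "h ` K \<subseteq> K" unfolding K_def using hW M unfolding minimal_set_def h_def by auto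
    have K0: "fst p \<noteq> 0" if "p \<in> K" for p
      using that False unfolding K_def by (metis IntD1 IntD2 mem_Times_iff prod.collapse)
    have "continuous_on K (\<lambda>p. dist 0 (fst p))" by (intro continuous_intros)
    then obtain p0 where p0: "p0 \<in> K" "\<And>p. p \<in> K \<Longrightarrow> dist 0 (fst p0) \<le> dist 0 (fst p)"
      using continuous_attains_inf[OF cK Kne] by blast
    define \<delta> where "\<delta> = dist 0 (fst p0)"
    have dpos: "\<delta> > 0" unfolding \<delta>_def using K0[OF p0(1)] by simp
    define U where "U = {p :: 'a \<times> 'a. \<delta> / 2 < dist 0 (fst p)}"
    have oU: "open U" unfolding U_def by (intro open_Collect_less continuous_intros)
    have KU: "K \<subseteq> U"
    proof
      fix p assume "p \<in> K"
      then have "\<delta> \<le> dist 0 (fst p)" using p0(2) unfolding \<delta>_def by blast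
      then show "p \<in> U" unfolding U_def using dpos by simp
    qed
    obtain k where k: "k \<in> K" using Kne by auto
    have kW: "k \<in> closure (range (\<lambda>n. (h ^^ n) (a, x)))" using k unfolding K_def W_def by auto
    have thick: "\<forall>L. \<exists>m. {m..<m+L} \<subseteq> {n. (h ^^ n) (a, x) \<in> U}"
      by (rule thick_lemma[OF ch hK oU KU k kW])
    have "syndetic {n. dist ((f ^^ n) 0) ((f ^^ n) a) < \<delta> / 2}"
      using prox dpos unfolding SProx_def by (auto dest: spec[of _ "\<delta>/2"])
    from synd_thick[OF this thick] show ?thesis
      by (auto simp: U_def hn f0)
  qed
  have "minimal_points f \<subseteq> C" unfolding minimal_points_def using MC by auto
  then have "closure (minimal_points f) \<subseteq> C" using closedC by (rule closure_minimal)
  then show ?thesis using dense_M unfolding Tran_def C_def by auto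
qed


lemma sprox_empty:
  fixes f :: "'a::metric_space \<Rightarrow> 'a"
  assumes compact_X: "compact (UNIV :: 'a set)"
    and cont_f: "continuous_on UNIV f"
    and y_tran: "y \<in> Tran f"
    and infM: "infinite {M. minimal_set f M}"
    and z: "z \<in> minimal_points f"
  shows "(y, z) \<notin> SProx dist f"
proof
  assume prox: "(y, z) \<in> SProx dist f"
  define h where "h = map_prod f f"
  define W where "W = closure (range (\<lambda>n. (h ^^ n) (y, z)))"
  have ch: "continuous_on UNIV h" unfolding h_def by (rule cont_prodf[OF cont_f])
  have hn: "(h ^^ n) (u, v) = ((f ^^ n) u, (f ^^ n) v)" for n u v
    unfolding h_def by (rule funpow_prod)
  obtain M where M: "minimal_set f M" "z \<in> M" using z unfolding minimal_points_def by auto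
  have "infinite ({M. minimal_set f M} - {M})" using infM by simp
  then obtain M' where M': "minimal_set f M'" "M' \<noteq> M"
    by (metis (no_types, lifting) Diff_iff finite.emptyI mem_Collect_eq singletonI subsetI subset_antisym empty_subsetI)
  have disj: "M' \<inter> M = {}" by (rule minimal_disjoint[OF M'(1) M(1) M'(2)])
  have fstW: "fst ` W = UNIV"
  proof -
    have "fst ` W = closure (fst ` range (\<lambda>n. (h ^^ n) (y, z)))" unfolding W_def
      by (rule image_closure_compact[OF compact_prod_UNIV[OF compact_X]]) (intro continuous_intros)
    also have "fst ` range (\<lambda>n. (h ^^ n) (y, z)) = forward_orbit f y"
      unfolding orbit_eq by (auto simp: hn image_image)
    finally show ?thesis using y_tran unfolding Tran_def by simp
  qed
  have sndW: "snd ` W \<subseteq> M"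
  proof -
    have "snd ` W = closure (snd ` range (\<lambda>n. (h ^^ n) (y, z)))" unfolding W_def
      by (rule image_closure_compact[OF compact_prod_UNIV[OF compact_X]]) (intro continuous_intros)
    also have "snd ` range (\<lambda>n. (h ^^ n) (y, z)) = range (\<lambda>n. (f ^^ n) z)"
      by (auto simp: hn image_image)
    also have "closure \<dots> \<subseteq> M" using M unfolding minimal_set_def
      by (intro orbit_closure_sub) auto
    finally show ?thesis .
  qed
  obtain m' where "m' \<in> M'" using M' unfolding minimal_set_def by auto
  have "m' \<in> fst ` W" using fstW by simp
  then obtain v where vW: "(m', v) \<in> W" by force
  then have "v \<in> M" using sndW by force
  define K where "K = M' \<times> M"
  have kK: "(m', v) \<in> K" unfolding K_def using \<open>m' \<in> M'\<close> \<open>v \<in> M\<close> by simp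
  have Kne: "K \<noteq> {}" using kK by auto
  have "closed K" unfolding K_def using M M' unfolding minimal_set_def
    by (intro closed_Times) auto
  then have cK: "compact K" using compact_prod_UNIV[OF compact_X] closed_Int_compact[of K UNIV] by simp
  have hK: "h ` K \<subseteq> K" unfolding K_def h_def using M M' unfolding minimal_set_def by auto
  have K0: "fst p \<noteq> snd p" if "p \<in> K" for p
    using that disj unfolding K_def by auto
  have "continuous_on K (\<lambda>p. dist (fst p) (snd p))" by (intro continuous_intros)
  then obtain p0 where p0: "p0 \<in> K" "\<And>p. p \<in> K \<Longrightarrow> dist (fst p0) (snd p0) \<le> dist (fst p) (snd p)"
    using continuous_attains_inf[OF cK Kne] by blast
  define \<delta> where "\<delta> = dist (fst p0) (snd p0)"
  have dpos: "\<delta> > 0" unfolding \<delta>_def using K0[OF p0(1)] by simp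
  define U where "U = {p :: 'a \<times> 'a. \<delta> / 2 < dist (fst p) (snd p)}"
  have oU: "open U" unfolding U_def by (intro open_Collect_less continuous_intros)
  have KU: "K \<subseteq> U"
  proof
    fix p assume "p \<in> K"
    then have "\<delta> \<le> dist (fst p) (snd p)" using p0(2) unfolding \<delta>_def by blast
    then show "p \<in> U" unfolding U_def using dpos by simp
  qed
  have kW: "(m', v) \<in> closure (range (\<lambda>n. (h ^^ n) (y, z)))" using vW unfolding W_def by auto
  have thick: "\<forall>L. \<exists>m. {m..<m+L} \<subseteq> {n. (h ^^ n) (y, z) \<in> U}"
    by (rule thick_lemma[OF ch hK oU KU kK kW])
  have "syndetic {n. dist ((f ^^ n) y) ((f ^^ n) z) < \<delta> / 2}"
    using prox dpos unfolding SProx_def by (auto dest: spec[of _ "\<delta>/2"])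
  from synd_thick[OF this thick] show False
    by (auto simp: U_def hn)
qed

lemma syndetic_mono: "syndetic A \<Longrightarrow> A \<subseteq> B \<Longrightarrow> syndetic B"
  unfolding syndetic_def by blast

lemma scr_shift:
  fixes f :: "'a::{metric_space, group_add} \<Rightarrow> 'a"
  assumes compact_X: "compact (UNIV :: 'a set)"
    and cont_mult: "continuous_on UNIV (\<lambda>p :: 'a \<times> 'a. fst p + snd p)"
    and hom_f: "\<And>a b. f (a + b) = f a + f b"
    and S_scr: "synd_scrambled dist f S"
  shows "synd_scrambled dist f ((\<lambda>a. a + x) ` S)"
proof -
  have uc: "\<forall>e>0. \<exists>d>0. \<forall>u v w :: 'a. dist u v < d \<longrightarrow> dist (u + w) (v + w) < e"
    by (rule uc_add[OF compact_X cont_mult])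
  have pair: "(a + x, b + x) \<in> SProx dist f - Asy dist f" if ab: "a \<in> S" "b \<in> S" "a \<noteq> b" for a b
  proof -
    have in1: "(a, b) \<in> SProx dist f - Asy dist f" using S_scr ab unfolding synd_scrambled_def by blast
    have eq: "(f ^^ n) (c + x) = (f ^^ n) c + (f ^^ n) x" for n c by (rule hom_funpow[OF hom_f])
    have "syndetic {n. dist ((f ^^ n) (a + x)) ((f ^^ n) (b + x)) < e}" if e: "e > 0" for e
    proof -
      obtain d where d: "d > 0" "\<And>u v w :: 'a. dist u v < d \<Longrightarrow> dist (u + w) (v + w) < e"
        using uc e by blast
      have "syndetic {n. dist ((f ^^ n) a) ((f ^^ n) b) < d}" using in1 d(1) unfolding SProx_def by auto
      then show ?thesis by (rule syndetic_mono) (auto simp: eq d(2))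
    qed
    then have "(a + x, b + x) \<in> SProx dist f" unfolding SProx_def by auto
    moreover have "(a + x, b + x) \<notin> Asy dist f"
    proof
      assume "(a + x, b + x) \<in> Asy dist f"
      then have lim: "(\<lambda>n. dist ((f ^^ n) (a + x)) ((f ^^ n) (b + x))) \<longlonglongrightarrow> 0" unfolding Asy_def by auto
      have "(\<lambda>n. dist ((f ^^ n) a) ((f ^^ n) b)) \<longlonglongrightarrow> 0"
        unfolding LIMSEQ_iff
      proof (intro allI impI)
        fix r :: real assume r: "r > 0"
        obtain d where d: "d > 0" "\<And>u v w :: 'a. dist u v < d \<Longrightarrow> dist (u + w) (v + w) < r"
          using uc r by blast
        obtain no where no: "\<And>n. n \<ge> no \<Longrightarrow> norm (dist ((f ^^ n) (a + x)) ((f ^^ n) (b + x)) - 0) < d"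
          using lim d(1) unfolding LIMSEQ_iff by blast
        show "\<exists>no. \<forall>n\<ge>no. norm (dist ((f ^^ n) a) ((f ^^ n) b) - 0) < r"
        proof (intro exI allI impI)
          fix n assume "n \<ge> no"
          then have "dist ((f ^^ n) a + (f ^^ n) x) ((f ^^ n) b + (f ^^ n) x) < d" using no by (simp add: eq)
          then have "dist (((f ^^ n) a + (f ^^ n) x) + - (f ^^ n) x) (((f ^^ n) b + (f ^^ n) x) + - (f ^^ n) x) < r"
            by (rule d(2))
          then show "norm (dist ((f ^^ n) a) ((f ^^ n) b) - 0) < r" by (simp add: add.assoc)
        qed
      qed
      then have "(a, b) \<in> Asy dist f" unfolding Asy_def by auto
      then show False using in1 by auto
    qed
    ultimately show ?thesis by auto
  qed
  obtain a b where "a \<in> S" "b \<in> S" "a \<noteq> b" using S_scr unfolding synd_scrambled_def by blast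
  then have "\<exists>a\<in>(\<lambda>a. a + x) ` S. \<exists>b\<in>(\<lambda>a. a + x) ` S. a \<noteq> b" by auto
  then show ?thesis unfolding synd_scrambled_def using pair by auto
qed

lemma eps_shift:
  fixes f :: "'a::group_add \<Rightarrow> 'a" and d :: "'a \<Rightarrow> 'a \<Rightarrow> real"
  assumes hom_f: "\<And>a b. f (a + b) = f a + f b"
    and inv: "two_sided_invariant d"
    and scr: "synd_eps_scrambled d f \<epsilon> S"
  shows "synd_eps_scrambled d f \<epsilon> ((\<lambda>a. a + x) ` S)"
proof -
  have eq: "d ((f ^^ n) (a + x)) ((f ^^ n) (b + x)) = d ((f ^^ n) a) ((f ^^ n) b)" for n a b
    using inv unfolding two_sided_invariant_def by (simp add: hom_funpow[OF hom_f])
  have eqf: "(\<lambda>n. d ((f ^^ n) (a + x)) ((f ^^ n) (b + x))) = (\<lambda>n. d ((f ^^ n) a) ((f ^^ n) b))" for a b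
    by (simp add: eq)
  from scr show ?thesis
    unfolding synd_eps_scrambled_def synd_scrambled_def SProx_def Asy_def
    by (auto simp: eqf eq)
qed

theorem theorem4p3:
  fixes f :: "'a::{metric_space, group_add} \<Rightarrow> 'a"
    and S :: "'a set" and x :: 'a
  assumes compact_X: "compact (UNIV :: 'a set)"
    and infinite_X: "infinite (UNIV :: 'a set)"
    and cont_mult: "continuous_on UNIV (\<lambda>p :: 'a \<times> 'a. fst p + snd p)"
    and cont_inv: "continuous_on UNIV (uminus :: 'a \<Rightarrow> 'a)"
    and cont_f: "continuous_on UNIV f"
    and hom_f: "\<And>a b. f (a + b) = f a + f b"
    and trans_f: "transitive_map f"
    and dense_M: "closure (minimal_points f) = UNIV"
    and S_scr: "synd_scrambled dist f S"
    and e_in_S: "0 \<in> S"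
    and x_tran: "x \<in> Tran f"
  shows "S homeomorphic ((\<lambda>a. a + x) ` S)
       \<and> synd_scrambled dist f ((\<lambda>a. a + x) ` S)
       \<and> (\<forall>(d :: 'a \<Rightarrow> 'a \<Rightarrow> real) \<epsilon>. compatible_metric d \<and> two_sided_invariant d
            \<and> synd_eps_scrambled d f \<epsilon> S \<longrightarrow> synd_eps_scrambled d f \<epsilon> ((\<lambda>a. a + x) ` S))
       \<and> (\<lambda>a. a + x) ` S \<subseteq> Tran f
       \<and> (\<forall>y \<in> (\<lambda>a. a + x) ` S.
            infinite {M. minimal_set f M \<and> M \<subseteq> closure (forward_orbit f y)})
       \<and> (\<forall>y \<in> (\<lambda>a. a + x) ` S. {z. (y, z) \<in> SProx dist f} \<inter> minimal_points f = {})"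
  proof -
  let ?T = "(\<lambda>a. a + x) ` S"
  have c1: "continuous_on S (\<lambda>a. a + x)"
    using cont_transl[OF cont_mult, of x] by (rule continuous_on_subset) simp
  have c2: "continuous_on ?T (\<lambda>a. a + - x)"
    using cont_transl[OF cont_mult, of "-x"] by (rule continuous_on_subset) simp
  have i1: "(\<lambda>b. b + - x) ` ?T = S" unfolding image_image by (simp add: add.assoc)
  have "homeomorphism S ?T (\<lambda>a. a + x) (\<lambda>b. b + - x)"
    unfolding homeomorphism_def using c1 c2 i1 by (simp add: add.assoc)
  then have homeo: "S homeomorphic ?T" unfolding homeomorphic_def by blast
  have T_tran: "?T \<subseteq> Tran f"
  proof
    fix y assume "y \<in> ?T"
    then obtain a where a: "a \<in> S" "y = a + x" by auto
    show "y \<in> Tran f"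
    proof (cases "a = 0")
      case True then show ?thesis using a x_tran by simp
    next
      case False
      have "\<forall>x\<in>S. \<forall>y\<in>S. x \<noteq> y \<longrightarrow> (x, y) \<in> SProx dist f - Asy dist f"
        using S_scr unfolding synd_scrambled_def by (rule conjunct2)
      then have "(0, a) \<in> SProx dist f - Asy dist f" using a(1) e_in_S False by metis
      then have "(0, a) \<in> SProx dist f" by (rule DiffD1)
      then show ?thesis using a tran_shift[OF compact_X cont_mult cont_f hom_f dense_M x_tran] by simp
    qed
  qed
  have infM: "infinite {M. minimal_set f M}"
    by (rule inf_min[OF infinite_X hom_f dense_M x_tran])
  have ii: "\<forall>y \<in> ?T. infinite {M. minimal_set f M \<and> M \<subseteq> closure (forward_orbit f y)}"
  proof
    fix y assume "y \<in> ?T"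
    then have "closure (forward_orbit f y) = UNIV" using T_tran unfolding Tran_def by auto
    then show "infinite {M. minimal_set f M \<and> M \<subseteq> closure (forward_orbit f y)}" using infM by simp
  qed
  have iii: "\<forall>y \<in> ?T. {z. (y, z) \<in> SProx dist f} \<inter> minimal_points f = {}"
  proof (intro ballI)
    fix y assume "y \<in> ?T"
    then have yt: "y \<in> Tran f" using T_tran by blast
    show "{z. (y, z) \<in> SProx dist f} \<inter> minimal_points f = {}"
      using sprox_empty[OF compact_X cont_f yt infM] by blast
  qed
  have eps: "\<forall>(d :: 'a \<Rightarrow> 'a \<Rightarrow> real) \<epsilon>. compatible_metric d \<and> two_sided_invariant d
            \<and> synd_eps_scrambled d f \<epsilon> S \<longrightarrow> synd_eps_scrambled d f \<epsilon> ?T"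
  proof (intro allI impI)
    fix d :: "'a \<Rightarrow> 'a \<Rightarrow> real" and \<epsilon> :: real
    assume "compatible_metric d \<and> two_sided_invariant d \<and> synd_eps_scrambled d f \<epsilon> S"
    then show "synd_eps_scrambled d f \<epsilon> ?T" using eps_shift[OF hom_f, of d \<epsilon> S x] by simp
  qed
  show ?thesis
    by (intro conjI homeo scr_shift[OF compact_X cont_mult hom_f S_scr] eps T_tran ii iii)
qed

end
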